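(* Every $g=(A,v)\in\mathrm{Aff}(n,\mathbb{C})$ with $|\det A|=1$ is a product of at most four coninvolutions in $\mathrm{Aff}(n,\mathbb{C})$.
   Context: $\mathrm{Aff}(n,\mathbb{C})$ is the group of affine maps $z\mapsto Az+v$ of $\mathbb{C}^n$, written $g=(A,v)$ with $A\in\mathrm{GL}(n,\mathbb{C})$, $v\in\mathbb{C}^n$; the product is composition, $(A,v)(B,w)=(AB,Aw+v)$, and the identity is $e=(I_n,0)$. For $g=(A,v)$ set $\overline{g}=(\overline{A},\overline{v})$ (entrywise complex conjugation). An element $h$ is a coninvolution if $h\overline{h}=e$. *)

theory Defs
  imports "HOL-Analysis.Analysis"
begin

text \<open>Elements of Aff(n,C): pairs (A, v) with A an invertible complex n x n matrix
  and v a vector in C^n, representing z \<mapsto> A z + v. The dimension n is CARD('n).\<close>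

type_synonym 'n aff = "(complex^'n^'n) \<times> (complex^'n)"

definition in_Aff :: "'n::finite aff \<Rightarrow> bool" where
  "in_Aff g \<longleftrightarrow> invertible (fst g)"

definition aff_mult :: "'n::finite aff \<Rightarrow> 'n aff \<Rightarrow> 'n aff" where
  "aff_mult g h = (fst g ** fst h, fst g *v snd h + snd g)"

definition aff_id :: "'n::finite aff" where
  "aff_id = (mat 1, 0)"

definition aff_conj :: "'n::finite aff \<Rightarrow> 'n aff" where
  "aff_conj g = ((\<chi> i j. cnj (fst g $ i $ j)), (\<chi> i. cnj (snd g $ i)))"

definition coninvolution :: "'n::finite aff \<Rightarrow> bool" where
  "coninvolution h \<longleftrightarrow> aff_mult h (aff_conj h) = aff_id"

end

theory Submission
  imports Defs "Jordan_Normal_Form.Jordan_Normal_Form_Existence"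
begin

hide_const (open) Determinant.det Matrix.mat


fun phi :: "(nat \<Rightarrow> complex) \<Rightarrow> complex \<Rightarrow> nat \<Rightarrow> complex" where
  "phi D u 0 = D 0 * cnj u"
| "phi D u (Suc p) = D (Suc p) * cnj (phi D u p)"

definition prv :: "(nat \<Rightarrow> complex) \<Rightarrow> complex \<Rightarrow> nat \<Rightarrow> complex" where
  "prv D u p = (if p = 0 then u else phi D u (p - 1))"
definition psi :: "(nat \<Rightarrow> complex) \<Rightarrow> complex \<Rightarrow> nat \<Rightarrow> complex" where
  "psi D u p = 1 / cnj (prv D u p)"
definition cc :: "(nat \<Rightarrow> complex) \<Rightarrow> complex \<Rightarrow> nat \<Rightarrow> complex" where
  "cc D u p = (if even p then phi D u p else psi D u p)"
definition dd :: "(nat \<Rightarrow> complex) \<Rightarrow> complex \<Rightarrow> nat \<Rightarrow> complex" where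
  "dd D u p = (if even p then psi D u p else phi D u p)"
definition rho :: "(nat \<Rightarrow> complex) \<Rightarrow> nat \<Rightarrow> real" where
  "rho D p = (\<Prod>q<p. cmod (D q))"

lemma phi_prv: "phi D u p = D p * cnj (prv D u p)"
  by (cases p) (auto simp: prv_def)

lemma rho_Suc: "rho D (Suc p) = rho D p * cmod (D q)" if "q = p"
  using that by (simp add: rho_def)

lemma rho_pos: assumes "\<And>q. D q \<noteq> 0" shows "rho D p > 0"
  using assms unfolding rho_def by (intro prod_pos) auto

lemma cmod_phi: assumes "cmod u = 1" shows "cmod (phi D u p) = rho D (Suc p)"
  using assms by (induct p) (auto simp: rho_def norm_mult)

lemma cmod_prv: assumes "cmod u = 1" shows "cmod (prv D u p) = rho D p"
  using assms cmod_phi[OF assms] by (cases p) (auto simp: prv_def rho_def)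

lemma prv_nz: assumes "cmod u = 1" "\<And>q. D q \<noteq> 0" shows "prv D u p \<noteq> 0"
proof -
  have "cmod (prv D u p) > 0" using cmod_prv[OF assms(1)] rho_pos[OF assms(2)] by simp
  thus ?thesis by auto
qed

lemma phi_nz: assumes "cmod u = 1" "\<And>q. D q \<noteq> 0" shows "phi D u p \<noteq> 0"
proof -
  have "cmod (phi D u p) > 0" using cmod_phi[OF assms(1)] rho_pos[OF assms(2)] by simp
  thus ?thesis by auto
qed

lemma dd_cc: assumes "cmod u = 1" "\<And>q. D q \<noteq> 0" shows "dd D u p * cc D u p = D p"
  using prv_nz[OF assms, where p=p]
  by (auto simp: dd_def cc_def psi_def phi_prv[of D u p] field_simps)

lemma dd_pair: assumes "cmod u = 1" "\<And>q. D q \<noteq> 0" "odd p"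
  shows "dd D u (Suc p) * cnj (dd D u p) = 1"
  using phi_nz[OF assms(1,2), where p=p] assms(3)
  by (auto simp: dd_def psi_def prv_def field_simps)

lemma cc_pair: assumes "cmod u = 1" "\<And>q. D q \<noteq> 0" "even p"
  shows "cc D u (Suc p) * cnj (cc D u p) = 1"
  using phi_nz[OF assms(1,2), where p=p] assms(3)
  by (auto simp: cc_def psi_def prv_def field_simps)

lemma cmod_cc: assumes "cmod u = 1"
  shows "cmod (cc D u p) = (if even p then rho D (Suc p) else 1 / rho D p)"
  using cmod_phi[OF assms] cmod_prv[OF assms]
  by (auto simp: cc_def psi_def norm_divide)

lemma cmod_dd: assumes "cmod u = 1"
  shows "cmod (dd D u p) = (if even p then 1 / rho D p else rho D (Suc p))"
  using cmod_phi[OF assms] cmod_prv[OF assms]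
  by (auto simp: dd_def psi_def norm_divide)

lemma unimod_cnj: "cmod u = 1 \<Longrightarrow> u * cnj u = 1"
  using complex_norm_square[of u] by simp

lemma dd_0: "cmod u = 1 \<Longrightarrow> dd D u 0 = u"
proof -
  assume u: "cmod u = 1"
  hence "u * cnj u = 1" by (rule unimod_cnj)
  moreover have "cnj u \<noteq> 0" using u by auto
  ultimately show ?thesis by (simp add: dd_def psi_def prv_def field_simps)
qed

locale chain =
  fixes D :: "nat \<Rightarrow> complex" and m n1 :: nat
  assumes nz: "\<And>q. D q \<noteq> 0"
    and n1m: "n1 \<le> m"
    and ph1: "\<And>q. q < n1 \<Longrightarrow> cmod (D q) > 1"
    and ph2: "\<And>q. n1 \<le> q \<Longrightarrow> q < m \<Longrightarrow> cmod (D q) < 1"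
    and tot: "rho D m = 1"
begin

lemma rho_inc: "q \<le> n1 \<Longrightarrow> p < q \<Longrightarrow> rho D p < rho D q"
proof (induct q)
  case 0 then show ?case by simp
next
  case (Suc q)
  have pos: "rho D q > 0" by (rule rho_pos[OF nz])
  have "rho D q < rho D (Suc q)"
    using ph1[of q] Suc.prems pos by (simp add: rho_def)
  then show ?case using Suc by (cases "p = q") auto
qed

lemma rho_dec: "n1 \<le> p \<Longrightarrow> p < q \<Longrightarrow> q \<le> m \<Longrightarrow> rho D q < rho D p"
proof (induct q)
  case 0 then show ?case by simp
next
  case (Suc q)
  have pos: "rho D q > 0" by (rule rho_pos[OF nz])
  have "rho D (Suc q) < rho D q"
    using ph2[of q] Suc.prems pos by (simp add: rho_def)
  then show ?case using Suc by (cases "p = q") auto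
qed

lemma rho_0: "rho D 0 = 1" by (simp add: rho_def)

lemma rho_gt1: "0 < p \<Longrightarrow> p < m \<Longrightarrow> rho D p > 1"
proof (cases "p \<le> n1")
  case True
  assume "0 < p" "p < m"
  then show ?thesis using rho_inc[OF True, of 0] rho_0 by simp
next
  case False
  assume "0 < p" "p < m"
  then show ?thesis using rho_dec[of p m] False tot by simp
qed

lemma rho_ge1: "p \<le> m \<Longrightarrow> rho D p \<ge> 1"
  using rho_gt1[of p] rho_0 tot by (cases "p = 0 \<or> p = m") auto

lemma rho_inj1: "p \<le> n1 \<Longrightarrow> q \<le> n1 \<Longrightarrow> rho D p = rho D q \<Longrightarrow> p = q"
  using rho_inc[of p q] rho_inc[of q p] by (cases p q rule: linorder_cases) auto

lemma rho_inj2: "n1 \<le> p \<Longrightarrow> n1 \<le> q \<Longrightarrow> p \<le> m \<Longrightarrow> q \<le> m \<Longrightarrow> rho D p = rho D q \<Longrightarrow> p = q"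
  using rho_dec[of p q] rho_dec[of q p] by (cases p q rule: linorder_cases) auto

lemma cc_inj:
  assumes u: "cmod u = 1" and pq: "p < m" "q < m" "p \<noteq> q" and ph: "p < n1 \<longleftrightarrow> q < n1"
  shows "cc D u p \<noteq> cc D u q"
proof
  assume eq: "cc D u p = cc D u q"
  hence eqm: "cmod (cc D u p) = cmod (cc D u q)" by simp
  have pos: "\<And>k. rho D k > 0" by (rule rho_pos[OF nz])
  have ev_ge: "\<And>k. even k \<Longrightarrow> k < m \<Longrightarrow> cmod (cc D u k) \<ge> 1"
    using rho_ge1 by (simp add: cmod_cc[OF u])
  have od_lt: "\<And>k. odd k \<Longrightarrow> k < m \<Longrightarrow> cmod (cc D u k) < 1"
  proof -
    fix k assume "odd k" "k < m"
    then have "rho D k > 1" using rho_gt1[of k] by (cases k) auto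
    then show "cmod (cc D u k) < 1" using \<open>odd k\<close> by (simp add: cmod_cc[OF u])
  qed
  consider "even p" "even q" | "odd p" "odd q" | "even p" "odd q" | "odd p" "even q" by blast
  then show False
  proof cases
    case 1
    then have r: "rho D (Suc p) = rho D (Suc q)" using eqm by (simp add: cmod_cc[OF u])
    show False
    proof (cases "p < n1")
      case True
      then show False using rho_inj1[OF _ _ r] ph pq by simp
    next
      case False
      then show False using rho_inj2[OF _ _ _ _ r] ph pq by simp
    qed
  next
    case 2
    then have r: "rho D p = rho D q" using eqm pos[of p] pos[of q] by (simp add: cmod_cc[OF u])
    show False
    proof (cases "p < n1")
      case True
      then show False using rho_inj1[OF _ _ r] ph pq by simp
    next
      case False
      then show False using rho_inj2[OF _ _ _ _ r] ph pq by simp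
    qed
  next
    case 3 then show False using ev_ge[of p] od_lt[of q] eqm pq by simp
  next
    case 4 then show False using ev_ge[of q] od_lt[of p] eqm pq by simp
  qed
qed

lemma dd_ne1:
  assumes u: "cmod u = 1" and p: "0 < p" "Suc p < m"
  shows "cmod (dd D u p) \<noteq> 1"
proof (cases "even p")
  case True
  then show ?thesis using rho_gt1[of p] p by (simp add: cmod_dd[OF u])
next
  case False
  then show ?thesis using rho_gt1[of "Suc p"] p by (simp add: cmod_dd[OF u])
qed

definition sp :: "nat \<Rightarrow> nat" where
  "sp p = (if odd p then (if Suc p < m then Suc p else p) else (if p = 0 then 0 else p - 1))"
definition tp :: "nat \<Rightarrow> nat" where
  "tp p = (if even p then (if Suc p < m then Suc p else p) else p - 1)"

lemma sp_lt: "p < m \<Longrightarrow> sp p < m" by (auto simp: sp_def)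
lemma tp_lt: "p < m \<Longrightarrow> tp p < m" by (auto simp: tp_def)
lemma sp_sp: "p < m \<Longrightarrow> sp (sp p) = p"
  by (cases p) (auto simp: sp_def intro: odd_pos)
lemma tp_tp: "p < m \<Longrightarrow> tp (tp p) = p"
  by (cases p) (auto simp: tp_def)

lemma last_unimod:
  assumes u: "cmod u = 1" and m: "m = Suc p"
  shows "if even p then cmod (cc D u p) = 1 else cmod (dd D u p) = 1"
  using tot m by (simp add: cmod_cc[OF u] cmod_dd[OF u])

lemma dd_sp: assumes u: "cmod u = 1" and p: "p < m"
  shows "dd D u (sp p) * cnj (dd D u p) = 1"
proof -
  consider "odd p" "Suc p < m" | "odd p" "Suc p = m" | "even p" "p = 0" | "even p" "p \<noteq> 0"
    using p by linarith
  then show ?thesis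
  proof cases
    case 1 then show ?thesis using dd_pair[OF u nz] by (simp add: sp_def)
  next
    case 2 then show ?thesis using last_unimod[OF u 2(2)[symmetric]] unimod_cnj by (simp add: sp_def)
  next
    case 3 then show ?thesis using dd_0[OF u] unimod_cnj[OF u] by (simp add: sp_def)
  next
    case 4
    then obtain q where q: "p = Suc q" by (cases p) auto
    with 4 have "odd q" by simp
    from dd_pair[OF u nz this] have "cnj (dd D u (Suc q) * cnj (dd D u q)) = 1" by simp
    then show ?thesis using q 4 by (simp add: sp_def mult.commute)
  qed
qed

lemma cc_tp: assumes u: "cmod u = 1" and p: "p < m"
  shows "cc D u (tp p) * cnj (cc D u p) = 1"
proof -
  consider "even p" "Suc p < m" | "even p" "Suc p = m" | "odd p"
    using p by linarith
  then show ?thesis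
  proof cases
    case 1 then show ?thesis using cc_pair[OF u nz] by (simp add: tp_def)
  next
    case 2 then show ?thesis using last_unimod[OF u 2(2)[symmetric]] unimod_cnj by (simp add: tp_def)
  next
    case 3
    then obtain q where q: "p = Suc q" by (cases p) auto
    with 3 have "even q" by simp
    from cc_pair[OF u nz this] have "cnj (cc D u (Suc q) * cnj (cc D u q)) = 1" by simp
    then show ?thesis using q 3 by (simp add: tp_def mult.commute)
  qed
qed

lemma phi_u: "phi D u p = phi D 1 p * (if even p then cnj u else u)"
  by (induct p) auto

lemma dd_last_ne1:
  assumes u: "cmod u = 1" and m: "m = Suc p" and p0: "0 < p"
    and ch: "odd p \<Longrightarrow> phi D 1 p * u \<noteq> 1"
  shows "dd D u p \<noteq> 1"
proof (cases "even p")
  case True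
  have "rho D p > 1" using rho_gt1[of p] m p0 by simp
  then have "cmod (dd D u p) \<noteq> 1" using True by (simp add: cmod_dd[OF u])
  then show ?thesis by auto
next
  case False
  then show ?thesis using ch phi_u[of u p] by (simp add: dd_def)
qed

end



definition xi :: "nat \<Rightarrow> complex" where
  "xi k = (1 + \<i> * of_nat (Suc k)) / (1 - \<i> * of_nat (Suc k))"

lemma xi_props: "cmod (xi k) = 1" "xi k \<noteq> 1" "xi k = xi l \<Longrightarrow> k = l"
proof -
  have nz: "\<And>t::real. 1 - \<i> * of_real t \<noteq> 0"
    by (simp add: complex_eq_iff)
  have m: "\<And>t::real. cmod (1 + \<i> * of_real t) = cmod (1 - \<i> * of_real t)"
    by (simp add: cmod_def)
  show "cmod (xi k) = 1" unfolding xi_def using m[of "real (Suc k)"] nz[of "real (Suc k)"]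
    by (simp add: norm_divide)
  show "xi k \<noteq> 1"
  proof
    assume "xi k = 1"
    then have "1 + \<i> * of_nat (Suc k) = 1 - \<i> * of_nat (Suc k)"
      using nz[of "real (Suc k)"] unfolding xi_def by (simp add: field_simps)
    then show False by (simp add: complex_eq_iff)
  qed
  show "xi k = xi l \<Longrightarrow> k = l"
  proof -
    assume "xi k = xi l"
    then have "(1 + \<i> * of_nat (Suc k)) * (1 - \<i> * of_nat (Suc l)) = (1 + \<i> * of_nat (Suc l)) * (1 - \<i> * of_nat (Suc k))"
      using nz[of "real (Suc k)"] nz[of "real (Suc l)"] unfolding xi_def by (simp add: field_simps)
    then show "k = l" by (simp add: complex_eq_iff algebra_simps)
  qed
qed

lemma core_combi:
  fixes n :: nat and J :: "nat \<Rightarrow> nat \<Rightarrow> complex"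
  assumes jord: "\<And>i. Suc i < n \<Longrightarrow> J i (Suc i) \<noteq> 0 \<Longrightarrow> J i i = J (Suc i) (Suc i)"
    and det1: "cmod (\<Prod>i<n. J i i) = 1"
  shows "\<exists>\<delta> c \<sigma> \<tau>. (\<forall>k<n. \<delta> k * c k = J k k) \<and> (\<forall>k<n. \<delta> k \<noteq> 1) \<and>
     (\<forall>k<n. \<sigma> k < n \<and> \<sigma> (\<sigma> k) = k \<and> \<delta> (\<sigma> k) * cnj (\<delta> k) = 1) \<and>
     (\<forall>k<n. \<tau> k < n \<and> \<tau> (\<tau> k) = k \<and> c (\<tau> k) * cnj (c k) = 1) \<and>
     (\<forall>i j. i < j \<longrightarrow> j < n \<longrightarrow> (\<forall>l. i \<le> l \<longrightarrow> l < j \<longrightarrow> J l (Suc l) \<noteq> 0) \<longrightarrow> c i \<noteq> c j)"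
proof -
  define d where "d k = J k k" for k
  define r where "r k = cmod (d k)" for k
  have dnz: "d k \<noteq> 0" if "k < n" for k
  proof
    assume "d k = 0"
    then have "(\<Prod>i<n. J i i) = 0" using that by (auto simp: d_def prod_zero_iff intro!: bexI[of _ k])
    with det1 show False by simp
  qed
  define F1 where "F1 = filter (\<lambda>k. r k > 1) [0..<n]"
  define F2 where "F2 = filter (\<lambda>k. r k < 1) [0..<n]"
  define L where "L = F1 @ F2"
  define m where "m = length L"
  define n1 where "n1 = length F1"
  have distL: "distinct L" unfolding L_def F1_def F2_def by auto
  have setL: "set L = {k. k < n \<and> r k \<noteq> 1}" unfolding L_def F1_def F2_def by auto
  have bij: "bij_betw (nth L) {..<m} (set L)" using bij_betw_nth[OF distL] m_def by simp
  define pos where "pos = inv_into {..<m} (nth L)"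
  have pos1: "pos k < m" "L ! pos k = k" if "k \<in> set L" for k
    using that bij unfolding pos_def bij_betw_def
    by (metis inv_into_into lessThan_iff, metis f_inv_into_f)
  have pos2: "pos (L ! p) = p" if "p < m" for p
    using that bij unfolding pos_def by (simp add: bij_betw_def inv_into_f_f)
  have Lnth: "L ! p \<in> set L" if "p < m" for p using that m_def by simp
  have Lph1: "p < n1 \<Longrightarrow> L ! p \<in> set F1" for p
    unfolding L_def n1_def by (simp add: nth_append)
  have Lph2: "n1 \<le> p \<Longrightarrow> p < m \<Longrightarrow> L ! p \<in> set F2" for p
    unfolding L_def n1_def m_def by (simp add: nth_append)
  define D where "D p = (if p < m then d (L ! p) else 1)" for p
  interpret ch: chain D m n1
  proof
    show "D q \<noteq> 0" for q using Lnth[of q] setL dnz by (auto simp: D_def)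
    show "n1 \<le> m" by (simp add: n1_def m_def L_def)
    show "cmod (D q) > 1" if "q < n1" for q
      using Lph1[OF that] that by (auto simp: D_def F1_def r_def n1_def m_def L_def)
    show "cmod (D q) < 1" if "n1 \<le> q" "q < m" for q
      using Lph2[OF that] that by (auto simp: D_def F2_def r_def)
    have "rho D m = (\<Prod>q<m. r (L ! q))" unfolding rho_def by (simp add: D_def r_def)
    also have "\<dots> = (\<Prod>k\<in>set L. r k)"
      using prod.reindex_bij_betw[OF bij, of r] by simp
    also have "\<dots> = (\<Prod>k<n. r k)"
      by (rule prod.mono_neutral_left) (auto simp: setL)
    also have "\<dots> = 1" using det1 by (simp add: r_def d_def prod_norm)
    finally show "rho D m = 1" .
  qed
  define u where "u = (if phi D 1 (m - 1) * (-1) = 1 then \<i> else -1)"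
  have u1: "cmod u = 1" by (simp add: u_def)
  have un1: "u \<noteq> 1" by (auto simp: u_def complex_eq_iff)
  have uch: "phi D 1 (m - 1) * u \<noteq> 1"
  proof (cases "phi D 1 (m - 1) * (-1) = 1")
    case True
    then have "phi D 1 (m - 1) = -1" by (simp add: minus_equation_iff)
    then show ?thesis using True by (simp add: u_def complex_eq_iff)
  next
    case False
    then show ?thesis by (simp add: u_def)
  qed
  define \<delta> where "\<delta> k = (if k \<in> set L then dd D u (pos k) else cnj (xi k))" for k
  define c where "c k = (if k \<in> set L then cc D u (pos k) else d k * xi k)" for k
  define \<sigma> where "\<sigma> k = (if k \<in> set L then L ! ch.sp (pos k) else k)" for k
  define \<tau> where "\<tau> k = (if k \<in> set L then L ! ch.tp (pos k) else k)" for k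
  have DL: "D (pos k) = d k" if "k \<in> set L" for k using pos1[OF that] by (simp add: D_def)
  have A: "\<forall>k<n. \<delta> k * c k = J k k"
  proof (intro allI impI)
    fix k assume k: "k < n"
    show "\<delta> k * c k = J k k"
    proof (cases "k \<in> set L")
      case True
      then show ?thesis using dd_cc[OF u1 ch.nz, where p="pos k"] DL[OF True]
        by (simp add: \<delta>_def c_def d_def)
    next
      case False
      have "cnj (xi k) * xi k = 1" using unimod_cnj[OF xi_props(1)[of k]] by (simp add: mult.commute)
      then have "cnj (xi k) * (d k * xi k) = d k" by (metis mult.commute mult.left_commute mult_1_right)
      then show ?thesis using False by (simp add: \<delta>_def c_def d_def)
    qed
  qed
  have B: "\<forall>k<n. \<delta> k \<noteq> 1"
  proof (intro allI impI)
    fix k assume k: "k < n"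
    show "\<delta> k \<noteq> 1"
    proof (cases "k \<in> set L")
      case False
      then show ?thesis using xi_props(2)[of k] by (auto simp: \<delta>_def complex_eq_iff)
    next
      case True
      define p where "p = pos k"
      have pm: "p < m" using pos1[OF True] p_def by simp
      consider "p = 0" | "0 < p" "Suc p < m" | "0 < p" "m = Suc p" using pm by linarith
      then show ?thesis
      proof cases
        case 1 then show ?thesis using True dd_0[OF u1] un1 by (simp add: \<delta>_def p_def)
      next
        case 2 then show ?thesis using True ch.dd_ne1[OF u1 2] by (auto simp: \<delta>_def p_def)
      next
        case 3 then show ?thesis using True ch.dd_last_ne1[OF u1 3(2) 3(1)] uch by (simp add: \<delta>_def p_def)
      qed
    qed
  qed
  have C: "\<forall>k<n. \<sigma> k < n \<and> \<sigma> (\<sigma> k) = k \<and> \<delta> (\<sigma> k) * cnj (\<delta> k) = 1"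
  proof (intro allI impI)
    fix k assume k: "k < n"
    show "\<sigma> k < n \<and> \<sigma> (\<sigma> k) = k \<and> \<delta> (\<sigma> k) * cnj (\<delta> k) = 1"
    proof (cases "k \<in> set L")
      case False
      then show ?thesis using k unimod_cnj[OF xi_props(1)[of k]]
        by (simp add: \<sigma>_def \<delta>_def mult.commute)
    next
      case True
      have pm: "pos k < m" using pos1[OF True] by simp
      have sp: "ch.sp (pos k) < m" using ch.sp_lt[OF pm] .
      have inL: "L ! ch.sp (pos k) \<in> set L" using Lnth[OF sp] .
      have ps: "pos (L ! ch.sp (pos k)) = ch.sp (pos k)" using pos2[OF sp] .
      show ?thesis using True inL ps setL ch.sp_sp[OF pm] pos1[OF True] ch.dd_sp[OF u1 pm]
        by (auto simp: \<sigma>_def \<delta>_def)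
    qed
  qed
  have E: "\<forall>k<n. \<tau> k < n \<and> \<tau> (\<tau> k) = k \<and> c (\<tau> k) * cnj (c k) = 1"
  proof (intro allI impI)
    fix k assume k: "k < n"
    show "\<tau> k < n \<and> \<tau> (\<tau> k) = k \<and> c (\<tau> k) * cnj (c k) = 1"
    proof (cases "k \<in> set L")
      case False
      then have "r k = 1" using setL k by auto
      then have "cmod (d k * xi k) = 1" using xi_props(1)[of k] by (simp add: r_def norm_mult)
      from unimod_cnj[OF this] show ?thesis using k False
        by (simp add: \<tau>_def c_def)
    next
      case True
      have pm: "pos k < m" using pos1[OF True] by simp
      have sp: "ch.tp (pos k) < m" using ch.tp_lt[OF pm] .
      have inL: "L ! ch.tp (pos k) \<in> set L" using Lnth[OF sp] .
      have ps: "pos (L ! ch.tp (pos k)) = ch.tp (pos k)" using pos2[OF sp] .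
      show ?thesis using True inL ps setL ch.tp_tp[OF pm] pos1[OF True] ch.cc_tp[OF u1 pm]
        by (auto simp: \<tau>_def c_def)
    qed
  qed
  have blk: "d i = d j" if "i \<le> j" "j < n" "\<forall>l. i \<le> l \<longrightarrow> l < j \<longrightarrow> J l (Suc l) \<noteq> 0" for i j
    using that
  proof (induct j)
    case 0 then show ?case by simp
  next
    case (Suc j)
    show ?case
    proof (cases "i = Suc j")
      case True then show ?thesis by simp
    next
      case False
      then have "i \<le> j" using Suc.prems by simp
      then have "d i = d j" using Suc by simp
      moreover have "J j (Suc j) \<noteq> 0" using Suc.prems \<open>i \<le> j\<close> by simp
      ultimately show ?thesis using jord[of j] Suc.prems by (simp add: d_def)
    qed
  qed
  have F: "\<forall>i j. i < j \<longrightarrow> j < n \<longrightarrow> (\<forall>l. i \<le> l \<longrightarrow> l < j \<longrightarrow> J l (Suc l) \<noteq> 0) \<longrightarrow> c i \<noteq> c j"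
  proof (intro allI impI)
    fix i j assume ij: "i < j" "j < n" and ch: "\<forall>l. i \<le> l \<longrightarrow> l < j \<longrightarrow> J l (Suc l) \<noteq> 0"
    have dij: "d i = d j" using blk[of i j] ij ch by simp
    then have rij: "r i = r j" by (simp add: r_def)
    show "c i \<noteq> c j"
    proof (cases "i \<in> set L")
      case False
      then have jL: "j \<notin> set L" using setL rij ij by auto
      show ?thesis
      proof
        assume "c i = c j"
        then have "d i * xi i = d i * xi j" using False jL dij by (simp add: c_def)
        then have "xi i = xi j" using dnz[of i] ij by simp
        then show False using xi_props(3) ij by auto
      qed
    next
      case True
      then have jL: "j \<in> set L" using setL rij ij by auto
      have pi: "pos i < m" "pos j < m" using pos1 True jL by auto
      have pne: "pos i \<noteq> pos j"
      proof
        assume "pos i = pos j"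
        then have "L ! pos i = L ! pos j" by simp
        then show False using pos1(2)[OF True] pos1(2)[OF jL] ij by simp
      qed
      have phk: "pos k < n1 \<longleftrightarrow> r k > 1" if "k \<in> set L" for k
      proof
        assume "pos k < n1"
        then show "r k > 1" using Lph1[of "pos k"] pos1[OF that] by (auto simp: F1_def)
      next
        assume "r k > 1"
        show "pos k < n1"
        proof (rule ccontr)
          assume "\<not> pos k < n1"
          then show False using Lph2[of "pos k"] pos1[OF that] \<open>r k > 1\<close> by (auto simp: F2_def)
        qed
      qed
      have "pos i < n1 \<longleftrightarrow> pos j < n1" using phk[OF True] phk[OF jL] rij by simp
      from ch.cc_inj[OF u1 pi pne this] show ?thesis using True jL by (simp add: c_def)
    qed
  qed
  show ?thesis
    apply (rule exI[of _ \<delta>])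
    apply (rule exI[of _ c])
    apply (rule exI[of _ \<sigma>])
    apply (rule exI[of _ \<tau>])
    using A B C E F by (intro conjI)
qed


definition hh :: "'n::finite \<Rightarrow> nat" where
  "hh = (SOME h. bij_betw h (UNIV::'n set) {..<CARD('n)})"

lemma hh_bij: "bij_betw (hh :: 'n::finite \<Rightarrow> nat) UNIV {..<CARD('n)}"
proof -
  obtain h :: "'n \<Rightarrow> nat" where "bij_betw h UNIV {0..<card (UNIV::'n set)}"
    using ex_bij_betw_finite_nat[of "UNIV::'n set"] by auto
  then have "\<exists>h::'n \<Rightarrow> nat. bij_betw h UNIV {..<CARD('n)}" by (auto simp: atLeast0LessThan)
  then show ?thesis unfolding hh_def by (rule someI_ex)
qed

lemma hh_lt: "hh (i::'n::finite) < CARD('n)"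
  using hh_bij[where 'n='n] by (auto simp: bij_betw_def)

lemma hh_inj: "hh (i::'n::finite) = hh j \<longleftrightarrow> i = j"
  using hh_bij[where 'n='n] by (auto simp: bij_betw_def inj_on_def)

lemma sum_hh: "(\<Sum>k::'n::finite\<in>UNIV. f (hh k)) = (\<Sum>k<CARD('n). f k)"
  using sum.reindex_bij_betw[OF hh_bij[where 'n='n], of f] by simp

lemma prod_hh: "(\<Prod>k::'n::finite\<in>UNIV. f (hh k)) = (\<Prod>k<CARD('n). f k)"
  using prod.reindex_bij_betw[OF hh_bij[where 'n='n], of f] by simp

definition cm :: "(nat \<Rightarrow> nat \<Rightarrow> complex) \<Rightarrow> complex^'n::finite^'n" where
  "cm f = (\<chi> i j. f (hh i) (hh j))"

definition cj :: "complex^'n::finite^'n \<Rightarrow> complex^'n^'n" where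
  "cj X = (\<chi> i j. cnj (X $ i $ j))"

definition mmul :: "nat \<Rightarrow> (nat \<Rightarrow> nat \<Rightarrow> complex) \<Rightarrow> (nat \<Rightarrow> nat \<Rightarrow> complex) \<Rightarrow> (nat \<Rightarrow> nat \<Rightarrow> complex)" where
  "mmul n f g = (\<lambda>i j. \<Sum>k<n. f i k * g k j)"

lemma cm_mult: "cm f ** (cm g :: complex^'n::finite^'n) = cm (mmul CARD('n) f g)"
  unfolding cm_def matrix_matrix_mult_def mmul_def
  by (simp add: sum_hh[where f="\<lambda>k. f (hh _) k * g k (hh _)"])

lemma cm_eq: "(\<And>i j. i < CARD('n) \<Longrightarrow> j < CARD('n) \<Longrightarrow> f i j = g i j) \<Longrightarrow> (cm f :: complex^'n::finite^'n) = cm g"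
  unfolding cm_def using hh_lt[where 'n='n] by (simp add: Finite_Cartesian_Product.vec_eq_iff)

definition idm :: "nat \<Rightarrow> nat \<Rightarrow> complex" where "idm i j = (if i = j then 1 else 0)"

lemma cm_id: "(cm idm :: complex^'n::finite^'n) = mat 1"
  unfolding cm_def idm_def Finite_Cartesian_Product.mat_def by (simp add: Finite_Cartesian_Product.vec_eq_iff hh_inj)

lemma cj_cm: "cj (cm f) = cm (\<lambda>i j. cnj (f i j))"
  unfolding cj_def cm_def by simp

lemma cj_mult: "cj (X ** Y) = cj X ** cj Y"
  unfolding cj_def matrix_matrix_mult_def by (simp add: Finite_Cartesian_Product.vec_eq_iff)

lemma cj_id: "cj (mat 1) = mat 1"
  unfolding cj_def Finite_Cartesian_Product.mat_def by (simp add: Finite_Cartesian_Product.vec_eq_iff)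

lemma cj_cj: "cj (cj X) = X"
  unfolding cj_def by (simp add: Finite_Cartesian_Product.vec_eq_iff)

lemma cm_det_upper:
  assumes "\<And>i j. j < i \<Longrightarrow> i < CARD('n) \<Longrightarrow> f i j = 0"
  shows "det (cm f :: complex^'n::finite^'n) = (\<Prod>k<CARD('n). f k k)"
proof -
  let ?A = "cm f :: complex^'n^'n"
  let ?U = "UNIV:: 'n set"
  let ?PU = "{p. p permutes ?U}"
  let ?pp = "\<lambda>p. of_int (sign p) * prod (\<lambda>i. ?A$i$p i) ?U"
  have id0: "{id} \<subseteq> ?PU" by (auto simp: permutes_id)
  have p0: "\<forall>p \<in> ?PU - {id}. ?pp p = 0"
  proof
    fix p assume p: "p \<in> ?PU - {id}"
    then have pp: "p permutes ?U" and pid: "p \<noteq> id" by auto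
    have "\<exists>i. hh (p i) < hh i"
    proof (rule ccontr)
      assume "\<not> (\<exists>i. hh (p i) < hh i)"
      then have le: "\<And>i. hh i \<le> hh (p i)" by (simp add: not_less)
      have "(\<Sum>i\<in>?U. hh (p i)) = (\<Sum>i\<in>?U. hh i)"
        using sum.permute[OF pp, of hh] by (simp add: comp_def)
      then have "(\<Sum>i\<in>?U. hh (p i) - hh i) = 0"
        using le by (simp add: sum_subtractf_nat)
      then have "\<And>i. hh (p i) - hh i = 0" by simp
      then have "\<And>i. p i = i" using le by (metis diff_is_0_eq hh_inj le_antisym)
      then show False using pid by (auto simp: fun_eq_iff)
    qed
    then obtain i where i: "hh (p i) < hh i" by blast
    have "?A $ i $ p i = 0" using assms[OF i hh_lt] by (simp add: cm_def)
    then show "?pp p = 0" by (auto intro!: prod_zero)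
  qed
  from sum.mono_neutral_cong_left[OF finite_permutations[of ?U] id0 p0]
  have "det ?A = prod (\<lambda>i. ?A$i$i) ?U" unfolding Determinants.det_def by (simp add: sign_id)
  also have "\<dots> = (\<Prod>k<CARD('n). f k k)" unfolding cm_def using prod_hh[of "\<lambda>k. f k k"] by simp
  finally show ?thesis .
qed

lemma cm_minus: "cm f - cm g = cm (\<lambda>i j. f i j - g i j)"
  unfolding cm_def by (simp add: Finite_Cartesian_Product.vec_eq_iff)

definition perm :: "(nat \<Rightarrow> nat) \<Rightarrow> nat \<Rightarrow> nat \<Rightarrow> complex" where
  "perm \<sigma> i j = (if j = \<sigma> i then 1 else 0)"
definition diag :: "(nat \<Rightarrow> complex) \<Rightarrow> nat \<Rightarrow> nat \<Rightarrow> complex" where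
  "diag f i j = (if i = j then f i else 0)"

lemma mmul_perm_left:
  assumes "\<sigma> i < n" shows "mmul n (perm \<sigma>) g i j = g (\<sigma> i) j"
proof -
  have "mmul n (perm \<sigma>) g i j = (\<Sum>k<n. if k = \<sigma> i then g k j else 0)"
    unfolding mmul_def perm_def by (intro sum.cong) auto
  also have "\<dots> = g (\<sigma> i) j" using assms by simp
  finally show ?thesis .
qed

lemma mmul_perm_right:
  assumes "\<forall>k<n. \<sigma> k < n \<and> \<sigma> (\<sigma> k) = k" "j < n"
  shows "mmul n g (perm \<sigma>) i j = g i (\<sigma> j)"
proof -
  have "mmul n g (perm \<sigma>) i j = (\<Sum>k<n. if k = \<sigma> j then g i k else 0)"
    unfolding mmul_def perm_def using assms by (intro sum.cong) auto
  also have "\<dots> = g i (\<sigma> j)" using assms by simp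
  finally show ?thesis .
qed

lemma mmul_diag_left:
  assumes "i < n" shows "mmul n (diag f) g i j = f i * g i j"
proof -
  have "mmul n (diag f) g i j = (\<Sum>k<n. if k = i then f i * g k j else 0)"
    unfolding mmul_def diag_def by (intro sum.cong) auto
  also have "\<dots> = f i * g i j" using assms by simp
  finally show ?thesis .
qed

lemma mmul_diag_right:
  assumes "j < n" shows "mmul n g (diag f) i j = g i j * f j"
proof -
  have "mmul n g (diag f) i j = (\<Sum>k<n. if k = j then g i k * f j else 0)"
    unfolding mmul_def diag_def by (intro sum.cong) auto
  also have "\<dots> = g i j * f j" using assms by simp
  finally show ?thesis .
qed

lemma bidiag_diagonalize:
  fixes n :: nat and M :: "nat \<Rightarrow> nat \<Rightarrow> complex" and c :: "nat \<Rightarrow> complex"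
  assumes bid: "\<And>i j. i < n \<Longrightarrow> j < n \<Longrightarrow> j \<noteq> i \<Longrightarrow> j \<noteq> Suc i \<Longrightarrow> M i j = 0"
    and dg: "\<And>i. i < n \<Longrightarrow> M i i = c i"
    and dist: "\<And>i j. i < j \<Longrightarrow> j < n \<Longrightarrow> (\<forall>l. i \<le> l \<longrightarrow> l < j \<longrightarrow> M l (Suc l) \<noteq> 0) \<Longrightarrow> c i \<noteq> c j"
    and V: "V = (\<lambda>i j. if i \<le> j then \<Prod>l\<in>{i..<j}. M l (Suc l) / (c j - c l) else 0)"
    and ij: "i < n" "j < n"
  shows "mmul n M V i j = V i j * c j"
proof -
  have "mmul n M V i j = (\<Sum>k<n. (if k = i then M i i * V i j else 0) + (if k = Suc i then M i (Suc i) * V (Suc i) j else 0))"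
    unfolding mmul_def using bid ij by (intro sum.cong) auto
  also have "\<dots> = M i i * V i j + (if Suc i < n then M i (Suc i) * V (Suc i) j else 0)"
    using ij by (simp add: sum.distrib)
  finally have L: "mmul n M V i j = c i * V i j + (if Suc i < n then M i (Suc i) * V (Suc i) j else 0)"
    using dg ij by simp
  consider "j < i" | "i = j" | "i < j" by linarith
  then show ?thesis
  proof cases
    case 1 then show ?thesis using L by (simp add: V)
  next
    case 2 then show ?thesis using L by (simp add: V)
  next
    case 3
    then have si: "Suc i < n" using ij by simp
    have Vij: "V i j = M i (Suc i) / (c j - c i) * V (Suc i) j"
      using 3 by (simp add: V prod.atLeast_Suc_lessThan)
    show ?thesis
    proof (cases "c i = c j")
      case False
      then have "c i * V i j + M i (Suc i) * V (Suc i) j = V i j * c j"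
        unfolding Vij by (simp add: field_simps)
      then show ?thesis using L si by simp
    next
      case True
      then obtain l where l: "i \<le> l" "l < j" "M l (Suc l) = 0" using dist[OF 3 ij(2)] by blast
      have "M i (Suc i) * V (Suc i) j = 0"
      proof (cases "l = i")
        case True then show ?thesis using l by simp
      next
        case False
        then have "l \<in> {Suc i..<j}" using l by auto
        then have "(\<Prod>l\<in>{Suc i..<j}. M l (Suc l) / (c j - c l)) = 0"
          using l by (intro prod_zero) auto
        then show ?thesis using 3 by (simp add: V)
      qed
      moreover have "V i j = 0" using Vij True by simp
      ultimately show ?thesis using L si by simp
    qed
  qed
qed

lemma mul_inv_cancel: "A ** B = mat 1 \<Longrightarrow> X ** A ** B = X"
  by (metis matrix_mul_assoc matrix_mul_rid)

lemma lin_core: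
  fixes J :: "nat \<Rightarrow> nat \<Rightarrow> complex"
  assumes bid: "\<And>i j. i < CARD('n) \<Longrightarrow> j < CARD('n) \<Longrightarrow> j \<noteq> i \<Longrightarrow> j \<noteq> Suc i \<Longrightarrow> J i j = 0"
    and jord: "\<And>i. Suc i < CARD('n) \<Longrightarrow> J i (Suc i) \<noteq> 0 \<Longrightarrow> J i i = J (Suc i) (Suc i)"
    and det1: "cmod (\<Prod>i<CARD('n). J i i) = 1"
  shows "\<exists>W1 W2 W3 W4 :: complex^'n::finite^'n. W1 ** cj W1 = mat 1 \<and> W2 ** cj W2 = mat 1 \<and>
     W3 ** cj W3 = mat 1 \<and> W4 ** cj W4 = mat 1 \<and> cm J = W1 ** W2 ** W3 ** W4 \<and>
     invertible (mat 1 - W1 ** W2)"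
proof -
  let ?n = "CARD('n)"
  obtain \<delta> c \<sigma> \<tau> where
    A: "\<forall>k<?n. \<delta> k * c k = J k k" and B: "\<forall>k<?n. \<delta> k \<noteq> 1" and
    C: "\<forall>k<?n. \<sigma> k < ?n \<and> \<sigma> (\<sigma> k) = k \<and> \<delta> (\<sigma> k) * cnj (\<delta> k) = 1" and
    E: "\<forall>k<?n. \<tau> k < ?n \<and> \<tau> (\<tau> k) = k \<and> c (\<tau> k) * cnj (c k) = 1" and
    F: "\<forall>i j. i < j \<longrightarrow> j < ?n \<longrightarrow> (\<forall>l. i \<le> l \<longrightarrow> l < j \<longrightarrow> J l (Suc l) \<noteq> 0) \<longrightarrow> c i \<noteq> c j"
    using core_combi[of ?n J, OF jord det1] by blast
  have \<delta>nz: "\<delta> k \<noteq> 0" if "k < ?n" for k using C that by force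
  define M where "M i j = J i j / \<delta> i" for i j
  define V where "V = (\<lambda>i j. if i \<le> j then \<Prod>l\<in>{i..<j}. M l (Suc l) / (c j - c l) else 0)"
  have MV: "mmul ?n M V i j = mmul ?n V (diag c) i j" if "i < ?n" "j < ?n" for i j
  proof -
    have h1: "M i j = 0" if "i < ?n" "j < ?n" "j \<noteq> i" "j \<noteq> Suc i" for i j
      using bid[OF that] by (simp add: M_def)
    have h2: "M i i = c i" if "i < ?n" for i
      using A that \<delta>nz[OF that] by (simp add: M_def field_simps)
    have h3: "c i \<noteq> c j" if "i < j" "j < ?n" "\<forall>l. i \<le> l \<longrightarrow> l < j \<longrightarrow> M l (Suc l) \<noteq> 0" for i j
      using F that \<delta>nz by (simp add: M_def)
    have "mmul ?n M V i j = V i j * c j" by (rule bidiag_diagonalize[OF h1 h2 h3 V_def that])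
    then show ?thesis using mmul_diag_right[OF that(2)] by simp
  qed
  define Ps where "Ps = (cm (perm \<sigma>) :: complex^'n^'n)"
  define Pt where "Pt = (cm (perm \<tau>) :: complex^'n^'n)"
  define Dc where "Dc = (cm (diag \<delta>) :: complex^'n^'n)"
  define Lc where "Lc = (cm (diag c) :: complex^'n^'n)"
  define Mc where "Mc = (cm M :: complex^'n^'n)"
  define Vc where "Vc = (cm V :: complex^'n^'n)"
  have permsq: "cm (perm \<rho>) ** cm (perm \<rho>) = (mat 1 :: complex^'n^'n)"
    if "\<forall>k<?n. \<rho> k < ?n \<and> \<rho> (\<rho> k) = k" for \<rho>
    unfolding cm_mult cm_id[symmetric] using that
    by (intro cm_eq) (simp add: mmul_perm_left perm_def idm_def)
  have permcj: "cj (cm (perm \<rho>)) = (cm (perm \<rho>) :: complex^'n^'n)" for \<rho>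
    unfolding cj_cm by (intro cm_eq) (simp add: perm_def)
  have permdiag: "cm (perm \<rho>) ** cm (diag f) ** cm (perm \<rho>) ** cj (cm (diag f)) = (mat 1 :: complex^'n^'n)"
    if "\<forall>k<?n. \<rho> k < ?n \<and> \<rho> (\<rho> k) = k \<and> f (\<rho> k) * cnj (f k) = 1" for \<rho> f
  proof -
    have 1: "cj (cm (diag f)) = (cm (diag (\<lambda>k. cnj (f k))) :: complex^'n^'n)"
      unfolding cj_cm by (intro cm_eq) (simp add: diag_def)
    have 2: "cm (perm \<rho>) ** cm (diag f) ** cm (perm \<rho>) = (cm (diag (\<lambda>k. f (\<rho> k))) :: complex^'n^'n)"
    proof -
      have inj: "\<forall>i<?n. \<forall>j<?n. \<rho> i = \<rho> j \<longrightarrow> i = j" using that by metis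
      show ?thesis unfolding cm_mult using that inj
        by (intro cm_eq) (auto simp: mmul_perm_left mmul_perm_right diag_def)
    qed
    have 3: "cm (diag (\<lambda>k. f (\<rho> k))) ** cm (diag (\<lambda>k. cnj (f k))) = (mat 1 :: complex^'n^'n)"
      unfolding cm_mult cm_id[symmetric] using that
      by (intro cm_eq) (simp add: mmul_diag_left diag_def idm_def)
    show ?thesis unfolding 1 2 3 ..
  qed
  have Ps2: "Ps ** Ps = mat 1" using permsq C unfolding Ps_def by blast
  have Pt2: "Pt ** Pt = mat 1" using permsq E unfolding Pt_def by blast
  have Pscj: "cj Ps = Ps" unfolding Ps_def by (rule permcj)
  have Ptcj: "cj Pt = Pt" unfolding Pt_def by (rule permcj)
  have PDPD: "Ps ** Dc ** Ps ** cj Dc = mat 1" unfolding Ps_def Dc_def by (rule permdiag) (use C in blast)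
  have PLPL: "Pt ** Lc ** Pt ** cj Lc = mat 1" unfolding Pt_def Lc_def by (rule permdiag) (use E in blast)
  have JDM: "cm J = Dc ** Mc" unfolding Dc_def Mc_def cm_mult
    by (intro cm_eq) (simp add: mmul_diag_left M_def \<delta>nz)
  have MVc: "Mc ** Vc = Vc ** Lc" unfolding Mc_def Vc_def Lc_def cm_mult by (intro cm_eq MV)
  have "det Vc = (\<Prod>k<?n. V k k)" unfolding Vc_def by (rule cm_det_upper) (simp add: V_def)
  also have "\<dots> = 1" by (simp add: V_def)
  finally have "invertible Vc" by (simp add: invertible_det_nz)
  then obtain Vi where Vi1: "Vc ** Vi = mat 1" using invertible_right_inverse by blast
  then have Vi2: "Vi ** Vc = mat 1" using matrix_left_right_inverse by blast
  have McV: "Mc = Vc ** Lc ** Vi"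
    by (metis MVc Vi1 matrix_mul_assoc matrix_mul_rid)
  have cjVV: "cj Vi ** cj Vc = mat 1" using Vi2 by (metis cj_mult cj_id)
  have cjVV2: "cj Vc ** cj Vi = mat 1" using Vi1 by (metis cj_mult cj_id)
  define W1 where "W1 = Ps"
  define W2 where "W2 = Ps ** Dc"
  define W3 where "W3 = Vc ** Pt ** cj Vi"
  define W4 where "W4 = cj Vc ** Pt ** Lc ** Vi"
  have w1: "W1 ** cj W1 = mat 1" unfolding W1_def Pscj Ps2 ..
  have w2: "W2 ** cj W2 = mat 1" unfolding W2_def cj_mult Pscj
    using PDPD by (simp add: matrix_mul_assoc)
  have w3: "W3 ** cj W3 = mat 1"
  proof -
    have "W3 ** cj W3 = Vc ** Pt ** (cj Vi ** cj Vc) ** Pt ** Vi"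
      unfolding W3_def cj_mult cj_cj Ptcj by (simp add: matrix_mul_assoc)
    also have "\<dots> = mat 1" using cjVV Pt2 Vi1 by (simp add: mul_inv_cancel)
    finally show ?thesis .
  qed
  have w4: "W4 ** cj W4 = mat 1"
  proof -
    have "W4 ** cj W4 = cj Vc ** (Pt ** Lc ** Pt ** cj Lc) ** cj Vi"
      unfolding W4_def cj_mult cj_cj Ptcj by (simp add: matrix_mul_assoc Vi2 mul_inv_cancel)
    also have "\<dots> = mat 1" using PLPL cjVV2 by simp
    finally show ?thesis .
  qed
  have prod: "cm J = W1 ** W2 ** W3 ** W4"
  proof -
    have "W1 ** W2 ** W3 ** W4 = (Ps ** Ps) ** Dc ** Vc ** (Pt ** (cj Vi ** cj Vc) ** Pt) ** Lc ** Vi"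
      unfolding W1_def W2_def W3_def W4_def by (simp add: matrix_mul_assoc)
    also have "\<dots> = Dc ** (Vc ** Lc ** Vi)" using Ps2 Pt2 cjVV by (simp add: matrix_mul_assoc)
    finally show ?thesis using JDM McV by simp
  qed
  have inv: "invertible (mat 1 - W1 ** W2)"
  proof -
    have "W1 ** W2 = Dc" unfolding W1_def W2_def by (simp add: matrix_mul_assoc Ps2)
    then have "mat 1 - W1 ** W2 = cm (\<lambda>i j. idm i j - diag \<delta> i j)"
      unfolding Dc_def cm_id[symmetric] by (simp add: cm_minus)
    moreover have "det (cm (\<lambda>i j. idm i j - diag \<delta> i j) :: complex^'n^'n) = (\<Prod>k<?n. 1 - \<delta> k)"
      by (subst cm_det_upper) (auto simp: idm_def diag_def)
    moreover have "(\<Prod>k<?n. 1 - \<delta> k) \<noteq> 0" using B by (simp add: prod_zero_iff)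
    ultimately show ?thesis by (simp add: invertible_det_nz)
  qed
  show ?thesis using w1 w2 w3 w4 prod inv by blast
qed


definition cv :: "complex^'n::finite \<Rightarrow> complex^'n" where
  "cv x = (\<chi> i. cnj (x $ i))"

lemma cv_mult: "cv (C *v x) = cj C *v cv x"
  unfolding cv_def cj_def matrix_vector_mult_def by (simp add: Finite_Cartesian_Product.vec_eq_iff)
lemma cv_diff: "cv (a - b) = cv a - cv b"
  unfolding cv_def by (simp add: Finite_Cartesian_Product.vec_eq_iff)
lemma cv_0: "cv 0 = 0"
  unfolding cv_def by (simp add: Finite_Cartesian_Product.vec_eq_iff)
lemma cv_cv: "cv (cv x) = x"
  unfolding cv_def by (simp add: Finite_Cartesian_Product.vec_eq_iff)

lemma aff_conj_eq: "aff_conj (C, w) = (cj C, cv w)"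
  unfolding aff_conj_def cj_def cv_def by simp

lemma coninv_iff: "coninvolution (C, w) \<longleftrightarrow> C ** cj C = mat 1 \<and> C *v cv w + w = 0"
  unfolding coninvolution_def aff_conj_eq aff_mult_def aff_id_def by auto

lemma inAff: "C ** cj C = mat 1 \<Longrightarrow> in_Aff (C, w)"
  unfolding in_Aff_def using invertible_right_inverse by auto

lemma affine_final:
  fixes C1 C2 C3 C4 :: "complex^'n::finite^'n" and v :: "complex^'n"
  assumes c1: "C1 ** cj C1 = mat 1" and c2: "C2 ** cj C2 = mat 1"
    and c3: "C3 ** cj C3 = mat 1" and c4: "C4 ** cj C4 = mat 1"
    and inv: "invertible (mat 1 - C1 ** C2)"
  shows "\<exists>hs :: 'n aff list. length hs \<le> 4 \<and>
           (\<forall>h\<in>set hs. in_Aff h \<and> coninvolution h) \<and>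
           foldr aff_mult hs aff_id = (C1 ** C2 ** C3 ** C4, v)"
proof -
  obtain Bi where Bi: "(mat 1 - C1 ** C2) ** Bi = mat 1" using inv invertible_right_inverse by blast
  define t where "t = Bi *v v"
  define h1 where "h1 = (C1, t - C1 *v cv t)"
  define h2 where "h2 = (C2, cv t - C2 *v t)"
  define h3 where "h3 = (C3, 0 :: complex^'n)"
  define h4 where "h4 = (C4, 0 :: complex^'n)"
  have k1: "coninvolution h1" unfolding h1_def coninv_iff
    using c1 by (simp add: cv_diff cv_mult cv_cv matrix_vector_mult_diff_distrib matrix_vector_mul_assoc)
  have k2: "coninvolution h2" unfolding h2_def coninv_iff
    using c2 by (simp add: cv_diff cv_mult cv_cv matrix_vector_mult_diff_distrib matrix_vector_mul_assoc)
  have k3: "coninvolution h3" unfolding h3_def coninv_iff using c3 by (simp add: cv_0)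
  have k4: "coninvolution h4" unfolding h4_def coninv_iff using c4 by (simp add: cv_0)
  have a: "in_Aff h1" "in_Aff h2" "in_Aff h3" "in_Aff h4"
    unfolding h1_def h2_def h3_def h4_def using c1 c2 c3 c4 inAff by auto
  have "foldr aff_mult [h1, h2, h3, h4] aff_id = (C1 ** C2 ** C3 ** C4, t - (C1 ** C2) *v t)"
    unfolding h1_def h2_def h3_def h4_def aff_mult_def aff_id_def
    by (simp add: matrix_mul_assoc matrix_vector_mult_diff_distrib matrix_vector_mul_assoc)
  also have "t - (C1 ** C2) *v t = v"
  proof -
    have "t - (C1 ** C2) *v t = (mat 1 - C1 ** C2) *v t"
      by (simp add: matrix_vector_mult_diff_rdistrib)
    also have "\<dots> = v" unfolding t_def matrix_vector_mul_assoc Bi by simp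
    finally show ?thesis .
  qed
  finally show ?thesis using k1 k2 k3 k4 a
    by (intro exI[of _ "[h1, h2, h3, h4]"]) auto
qed


lemma jordan_matrix_Cons: "jordan_matrix ((k,a) # rest) =
  four_block_mat (jordan_block k a) (0\<^sub>m k (dim_row (jordan_matrix rest)))
     (0\<^sub>m (dim_row (jordan_matrix rest)) k) (jordan_matrix rest)"
  using jordan_matrix_dim[of rest, unfolded jordan_matrix_def] unfolding jordan_matrix_def by (simp add: Let_def)

lemma jm_like:
  "(\<forall>i j. i < dim_row (jordan_matrix n_as) \<longrightarrow> j < dim_row (jordan_matrix n_as) \<longrightarrow> j \<noteq> i \<longrightarrow> j \<noteq> Suc i \<longrightarrow> jordan_matrix n_as $$ (i,j) = 0) \<and>
   (\<forall>i. Suc i < dim_row (jordan_matrix n_as) \<longrightarrow> jordan_matrix n_as $$ (i, Suc i) \<noteq> 0 \<longrightarrow> jordan_matrix n_as $$ (i,i) = jordan_matrix n_as $$ (Suc i, Suc i))"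
proof (induct n_as)
  case Nil
  then show ?case by (simp add: jordan_matrix_def)
next
  case (Cons ka rest)
  obtain k a where ka: "ka = (k,a)" by force
  let ?R = "jordan_matrix rest"
  let ?r = "dim_row ?R"
  have dc: "dim_col ?R = ?r" by simp
  note IH = Cons
  show ?case unfolding ka jordan_matrix_Cons
  proof (intro conjI allI impI)
    fix i j assume i: "i < dim_row (four_block_mat (jordan_block k a) (0\<^sub>m k ?r) (0\<^sub>m ?r k) ?R)"
      and j: "j < dim_row (four_block_mat (jordan_block k a) (0\<^sub>m k ?r) (0\<^sub>m ?r k) ?R)"
      and ji: "j \<noteq> i" "j \<noteq> Suc i"
    have i': "i < k + ?r" and j': "j < k + ?r" using i j by auto
    show "four_block_mat (jordan_block k a) (0\<^sub>m k ?r) (0\<^sub>m ?r k) ?R $$ (i, j) = 0"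
    proof (cases "i < k \<or> j < k")
      case True
      then show ?thesis using i' j' ji by (auto simp: dc)
    next
      case False
      then have "?R $$ (i - k, j - k) = 0" using IH i' j' ji by auto
      then show ?thesis using False i' j' by (simp add: dc)
    qed
  next
    fix i assume i: "Suc i < dim_row (four_block_mat (jordan_block k a) (0\<^sub>m k ?r) (0\<^sub>m ?r k) ?R)"
      and nz: "four_block_mat (jordan_block k a) (0\<^sub>m k ?r) (0\<^sub>m ?r k) ?R $$ (i, Suc i) \<noteq> 0"
    have i': "Suc i < k + ?r" using i by auto
    consider "Suc i < k" | "Suc i = k" | "k \<le> i" by linarith
    then show "four_block_mat (jordan_block k a) (0\<^sub>m k ?r) (0\<^sub>m ?r k) ?R $$ (i, i) =
      four_block_mat (jordan_block k a) (0\<^sub>m k ?r) (0\<^sub>m ?r k) ?R $$ (Suc i, Suc i)"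
    proof cases
      case 1 then show ?thesis using i' by (simp add: dc)
    next
      case 2 then show ?thesis using i' nz by (simp add: dc)
    next
      case 3
      then have s: "Suc i - k = Suc (i - k)" by simp
      have "?R $$ (i - k, Suc (i - k)) \<noteq> 0" using nz 3 i' s by (simp add: dc)
      then have "?R $$ (i - k, i - k) = ?R $$ (Suc (i - k), Suc (i - k))" using IH i' 3 by auto
      then show ?thesis using 3 i' s by (simp add: dc)
    qed
  qed
qed

lemma cm_mat_mult:
  assumes "X \<in> carrier_mat CARD('n) CARD('n)" "Y \<in> carrier_mat CARD('n) CARD('n)"
  shows "(cm (\<lambda>i j. (X * Y) $$ (i,j)) :: complex^'n::finite^'n) = cm (\<lambda>i j. X $$ (i,j)) ** cm (\<lambda>i j. Y $$ (i,j))"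
  unfolding cm_mult using assms
  by (intro cm_eq) (simp add: mmul_def scalar_prod_def atLeast0LessThan)

lemma cm_one: "(cm (\<lambda>i j. (1\<^sub>m CARD('n)) $$ (i,j)) :: complex^'n::finite^'n) = cm idm"
  by (intro cm_eq) (simp add: idm_def)

lemma jordan_cart:
  fixes A :: "complex^'n::finite^'n"
  shows "\<exists>P Q J. cm P ** cm Q = (cm idm :: complex^'n^'n) \<and> cm Q ** cm P = (cm idm :: complex^'n^'n) \<and>
     A = cm P ** cm J ** cm Q \<and>
     (\<forall>i j. i < CARD('n) \<longrightarrow> j < CARD('n) \<longrightarrow> j \<noteq> i \<longrightarrow> j \<noteq> Suc i \<longrightarrow> J i j = 0) \<and>
     (\<forall>i. Suc i < CARD('n) \<longrightarrow> J i (Suc i) \<noteq> 0 \<longrightarrow> J i i = J (Suc i) (Suc i))"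
proof -
  let ?N = "CARD('n)"
  define hinv where "hinv = inv_into UNIV (hh :: 'n \<Rightarrow> nat)"
  have hinv: "hinv (hh a) = a" for a
    unfolding hinv_def using hh_bij[where 'n='n] by (simp add: bij_betw_def inv_into_f_f)
  define B where "B = Matrix.mat ?N ?N (\<lambda>(i,j). vec_nth (vec_nth A (hinv i)) (hinv j))"
  have B: "B \<in> carrier_mat ?N ?N" unfolding B_def by simp
  have AB: "A = cm (\<lambda>i j. B $$ (i,j))"
    unfolding cm_def B_def using hh_lt[where 'n='n] by (simp add: hinv Finite_Cartesian_Product.vec_eq_iff)
  obtain es where "char_poly B = (\<Prod>a\<leftarrow>es. [:- a, 1:])" using char_poly_factorized[OF B] by blast
  from jordan_nf_exists[OF B this] obtain n_as where "jordan_nf B n_as" by blast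
  then have "similar_mat B (jordan_matrix n_as)" unfolding jordan_nf_def by simp
  then obtain P Q where w: "similar_mat_wit B (jordan_matrix n_as) P Q" unfolding similar_mat_def by blast
  let ?Jm = "jordan_matrix n_as"
  have dB: "dim_row B = ?N" using B by simp
  from w[unfolded similar_mat_wit_def Let_def dB]
  have car: "?Jm \<in> carrier_mat ?N ?N" "P \<in> carrier_mat ?N ?N" "Q \<in> carrier_mat ?N ?N"
    and PQ: "P * Q = 1\<^sub>m ?N" and QP: "Q * P = 1\<^sub>m ?N" and BPJQ: "B = P * ?Jm * Q" by auto
  have PJ: "P * ?Jm \<in> carrier_mat ?N ?N" using car by simp
  have e1: "A = cm (\<lambda>i j. P $$ (i,j)) ** cm (\<lambda>i j. ?Jm $$ (i,j)) ** cm (\<lambda>i j. Q $$ (i,j))"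
    unfolding AB BPJQ cm_mat_mult[OF PJ car(3)] cm_mat_mult[OF car(2) car(1)] ..
  have e2: "cm (\<lambda>i j. P $$ (i,j)) ** cm (\<lambda>i j. Q $$ (i,j)) = (cm idm :: complex^'n^'n)"
    unfolding cm_mat_mult[OF car(2) car(3), symmetric] PQ cm_one ..
  have e3: "cm (\<lambda>i j. Q $$ (i,j)) ** cm (\<lambda>i j. P $$ (i,j)) = (cm idm :: complex^'n^'n)"
    unfolding cm_mat_mult[OF car(3) car(2), symmetric] QP cm_one ..
  have dJ: "dim_row ?Jm = ?N" by (rule carrier_matD(1)[OF car(1)])
  from jm_like[of n_as, unfolded dJ]
  have l1: "\<forall>i j. i < ?N \<longrightarrow> j < ?N \<longrightarrow> j \<noteq> i \<longrightarrow> j \<noteq> Suc i \<longrightarrow> ?Jm $$ (i,j) = 0"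
    and l2: "\<forall>i. Suc i < ?N \<longrightarrow> ?Jm $$ (i, Suc i) \<noteq> 0 \<longrightarrow> ?Jm $$ (i,i) = ?Jm $$ (Suc i, Suc i)"
    by auto
  show ?thesis
    apply (rule exI[of _ "\<lambda>i j. P $$ (i,j)"])
    apply (rule exI[of _ "\<lambda>i j. Q $$ (i,j)"])
    apply (rule exI[of _ "\<lambda>i j. ?Jm $$ (i,j)"])
    using e1 e2 e3 l1 l2 by simp
qed



lemma msub_l: "(A::complex^'n::finite^'n) ** (B - C) = A ** B - A ** C"
  by (metis add_diff_cancel diff_add_cancel matrix_add_ldistrib)
lemma madd_r: "(B + C) ** (A::complex^'n::finite^'n) = B ** A + C ** A"
  unfolding matrix_matrix_mult_def
  by (simp add: Finite_Cartesian_Product.vec_eq_iff sum.distrib distrib_right)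
lemma msub_r: "(B - C) ** (A::complex^'n::finite^'n) = B ** A - C ** A"
  by (metis add_diff_cancel diff_add_cancel madd_r)

lemma sim_lemma:
  fixes S Si W :: "complex^'n::finite^'n"
  assumes SS: "S ** Si = mat 1" "Si ** S = mat 1" and W: "W ** cj W = mat 1"
  shows "(S ** W ** cj Si) ** cj (S ** W ** cj Si) = mat 1"
    "(cj S ** W ** Si) ** cj (cj S ** W ** Si) = mat 1"
proof -
  have a: "cj Si ** cj S = mat 1" using SS(2) by (metis cj_mult cj_id)
  have b: "cj S ** cj Si = mat 1" using SS(1) by (metis cj_mult cj_id)
  have "(S ** W ** cj Si) ** cj (S ** W ** cj Si) = S ** W ** (cj Si ** cj S) ** cj W ** Si"
    by (simp add: cj_mult cj_cj matrix_mul_assoc)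
  also have "\<dots> = S ** (W ** cj W) ** Si" using a by (simp add: matrix_mul_assoc)
  also have "\<dots> = mat 1" using W SS by simp
  finally show "(S ** W ** cj Si) ** cj (S ** W ** cj Si) = mat 1" .
  have "(cj S ** W ** Si) ** cj (cj S ** W ** Si) = cj S ** W ** (Si ** S) ** cj W ** cj Si"
    by (simp add: cj_mult cj_cj matrix_mul_assoc)
  also have "\<dots> = cj S ** (W ** cj W) ** cj Si" using SS by (simp add: matrix_mul_assoc)
  also have "\<dots> = mat 1" using W b by simp
  finally show "(cj S ** W ** Si) ** cj (cj S ** W ** Si) = mat 1" .
qed

theorem theorem3:
  fixes A :: "complex^'n::finite^'n" and v :: "complex^'n"
  assumes "invertible A" and "cmod (det A) = 1"
  shows "\<exists>hs :: 'n aff list. length hs \<le> 4 \<and>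
           (\<forall>h\<in>set hs. in_Aff h \<and> coninvolution h) \<and>
           foldr aff_mult hs aff_id = (A, v)"
proof -
  let ?N = "CARD('n)"
  obtain P Q J where PQ: "cm P ** cm Q = (cm idm :: complex^'n^'n)" and QP: "cm Q ** cm P = (cm idm :: complex^'n^'n)"
    and APJQ: "A = cm P ** cm J ** cm Q"
    and bid: "\<forall>i j. i < ?N \<longrightarrow> j < ?N \<longrightarrow> j \<noteq> i \<longrightarrow> j \<noteq> Suc i \<longrightarrow> J i j = 0"
    and jord: "\<forall>i. Suc i < ?N \<longrightarrow> J i (Suc i) \<noteq> 0 \<longrightarrow> J i i = J (Suc i) (Suc i)"
    using jordan_cart[of A] by blast
  define S where "S = (cm P :: complex^'n^'n)"
  define Si where "Si = (cm Q :: complex^'n^'n)"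
  have SS: "S ** Si = mat 1" "Si ** S = mat 1" using PQ QP cm_id unfolding S_def Si_def by auto
  have dS: "det S * det Si = 1" using SS(1) det_mul[of S Si] by simp
  have "det A = det S * det (cm J :: complex^'n^'n) * det Si" unfolding APJQ S_def Si_def by (simp add: det_mul)
  also have "\<dots> = det (cm J :: complex^'n^'n)" using dS by (simp add: algebra_simps)
  also have "\<dots> = (\<Prod>k<?N. J k k)" by (rule cm_det_upper) (use bid in auto)
  finally have det1: "cmod (\<Prod>k<?N. J k k) = 1" using assms(2) by simp
  obtain W1 W2 W3 W4 :: "complex^'n^'n" where w: "W1 ** cj W1 = mat 1" "W2 ** cj W2 = mat 1"
     "W3 ** cj W3 = mat 1" "W4 ** cj W4 = mat 1" and prod: "cm J = W1 ** W2 ** W3 ** W4"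
     and inv: "invertible (mat 1 - W1 ** W2)"
    using lin_core[of J] bid jord det1 by blast
  define C1 where "C1 = S ** W1 ** cj Si"
  define C2 where "C2 = cj S ** W2 ** Si"
  define C3 where "C3 = S ** W3 ** cj Si"
  define C4 where "C4 = cj S ** W4 ** Si"
  have c: "C1 ** cj C1 = mat 1" "C2 ** cj C2 = mat 1" "C3 ** cj C3 = mat 1" "C4 ** cj C4 = mat 1"
    unfolding C1_def C2_def C3_def C4_def using sim_lemma[OF SS] w by auto
  have a: "cj Si ** cj S = mat 1" using SS(2) by (metis cj_mult cj_id)
  have C12: "C1 ** C2 = S ** (W1 ** W2) ** Si"
    unfolding C1_def C2_def using a by (simp add: matrix_mul_assoc mul_inv_cancel)
  have C34: "C3 ** C4 = S ** (W3 ** W4) ** Si"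
    unfolding C3_def C4_def using a by (simp add: matrix_mul_assoc mul_inv_cancel)
  have CA: "C1 ** C2 ** C3 ** C4 = A"
  proof -
    have "C1 ** C2 ** C3 ** C4 = (C1 ** C2) ** (C3 ** C4)" by (simp add: matrix_mul_assoc)
    also have "\<dots> = S ** (W1 ** W2) ** (Si ** S) ** (W3 ** W4) ** Si"
      unfolding C12 C34 by (simp add: matrix_mul_assoc)
    also have "\<dots> = S ** (W1 ** W2 ** W3 ** W4) ** Si" using SS by (simp add: matrix_mul_assoc)
    also have "\<dots> = A" unfolding APJQ prod S_def Si_def ..
    finally show ?thesis .
  qed
  have inv2: "invertible (mat 1 - C1 ** C2)"
  proof -
    have "mat 1 - C1 ** C2 = S ** (mat 1 - W1 ** W2) ** Si"
      unfolding C12 using SS by (simp add: msub_l msub_r matrix_mul_assoc)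
    then have "det (mat 1 - C1 ** C2) = det S * det Si * det (mat 1 - W1 ** W2)"
      by (simp add: det_mul)
    then show ?thesis using inv dS by (simp add: invertible_det_nz)
  qed
  show ?thesis using affine_final[OF c inv2, of v] CA by simp
qed

end
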